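(* Assume that for any $i,j\in[1,n]$ the distance $|v_iv_j|$ can be obtained in $O(1)$ time. For $i\in[1,n]$ define $\lambda_i=\min_{j\in[i,n]}\max_{k\in[i,n]} d_{G(i,j)}(v_i,v_k)$ and let $j(i)$ be an index $j\in[i,n]$ attaining this minimum. Then there is an algorithm that computes $\lambda_i$ and $j(i)$ for all $i\in[1,n]$ in total $O(n)$ time.
   Context: Let $v_1,\dots,v_n$ be points of a metric space with metric $|\cdot|$: $|v_iv_j|=|v_jv_i|\ge 0$, $|v_iv_j|=0$ iff $i=j$, and $|v_iv_k|+|v_kv_j|\ge |v_iv_j|$. $P$ is the path graph with vertices $v_1,\dots,v_n$ and edges $e(v_k,v_{k+1})$, $k\in[1,n-1]$, where $e(v_k,v_{k+1})$ has length $|v_kv_{k+1}|$. For $1\le i\le j\le n$, $G(i,j)=P\cup\{e(v_i,v_j)\}$ is obtained from $P$ by adding an edge $e(v_i,v_j)$ of length $|v_iv_j|$ (if $j\le i+1$ then $G(i,j)=P$). For a graph $G$, $d_G(p,q)$ denotes the length of a shortest path between $p$ and $q$ in $G$. *)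

theory Defs
  imports Main "HOL.Real"
begin

definition metric_on :: "(nat \<Rightarrow> nat \<Rightarrow> real) \<Rightarrow> nat \<Rightarrow> bool" where
  "metric_on d n \<longleftrightarrow>
     (\<forall>i\<in>{1..n}. \<forall>j\<in>{1..n}. d i j = d j i \<and> d i j \<ge> 0 \<and> (d i j = 0 \<longleftrightarrow> i = j)) \<and>
     (\<forall>i\<in>{1..n}. \<forall>j\<in>{1..n}. \<forall>k\<in>{1..n}. d i k + d k j \<ge> d i j)"

definition path_edges :: "nat \<Rightarrow> (nat \<times> nat) set" where
  "path_edges n = {(k, Suc k) | k. 1 \<le> k \<and> k < n} \<union> {(Suc k, k) | k. 1 \<le> k \<and> k < n}"

definition G_edges :: "nat \<Rightarrow> nat \<Rightarrow> nat \<Rightarrow> (nat \<times> nat) set" where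
  "G_edges n i j = (if j \<le> i + 1 then path_edges n else path_edges n \<union> {(i, j), (j, i)})"

definition is_walk :: "(nat \<times> nat) set \<Rightarrow> nat \<Rightarrow> nat \<Rightarrow> nat list \<Rightarrow> bool" where
  "is_walk E p q xs \<longleftrightarrow> xs \<noteq> [] \<and> hd xs = p \<and> last xs = q \<and>
     (\<forall>m. Suc m < length xs \<longrightarrow> (xs ! m, xs ! Suc m) \<in> E)"

text \<open>Length of a walk; the edge e(v_a,v_b) has length |v_a v_b| = d a b.\<close>
definition walk_len :: "(nat \<Rightarrow> nat \<Rightarrow> real) \<Rightarrow> nat list \<Rightarrow> real" where
  "walk_len d xs = (\<Sum>m<length xs - 1. d (xs ! m) (xs ! Suc m))"

definition graph_dist :: "(nat \<Rightarrow> nat \<Rightarrow> real) \<Rightarrow> (nat \<times> nat) set \<Rightarrow> nat \<Rightarrow> nat \<Rightarrow> real" where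
  "graph_dist d E p q = Inf {walk_len d xs | xs. is_walk E p q xs}"

definition dG :: "(nat \<Rightarrow> nat \<Rightarrow> real) \<Rightarrow> nat \<Rightarrow> nat \<Rightarrow> nat \<Rightarrow> nat \<Rightarrow> nat \<Rightarrow> real" where
  "dG d n i j p q = graph_dist d (G_edges n i j) p q"

definition ecc :: "(nat \<Rightarrow> nat \<Rightarrow> real) \<Rightarrow> nat \<Rightarrow> nat \<Rightarrow> nat \<Rightarrow> real" where
  "ecc d n i j = Max ((\<lambda>k. dG d n i j i k) ` {i..n})"

definition lam :: "(nat \<Rightarrow> nat \<Rightarrow> real) \<Rightarrow> nat \<Rightarrow> nat \<Rightarrow> real" where
  "lam d n i = Min ((\<lambda>j. ecc d n i j) ` {i..n})"

section \<open>Machine model: unit-cost RAM with an integer memory and a real memory,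
  and an O(1) distance oracle\<close>

text \<open>All operands are (direct) memory addresses; ILoad/IStore/RLoad/RStore
  give indirect addressing through integer cells.\<close>
datatype instr =
    IConst int int
  | IAdd int int int
  | ISub int int int
  | ILoad int int
  | IStore int int
  | RConst int real
  | RAdd int int int
  | RSub int int int
  | RLoad int int
  | RStore int int
  | Dist int int int          (* rm a := |v_{im b} v_{im c}| (oracle, O(1)) *)
  | IJumpLe int int nat
  | RJumpLe int int nat
  | Halt

type_synonym conf = "nat \<times> (int \<Rightarrow> int) \<times> (int \<Rightarrow> real)"

fun exec :: "instr \<Rightarrow> (nat \<Rightarrow> nat \<Rightarrow> real) \<Rightarrow> conf \<Rightarrow> conf" where
  "exec (IConst a k) d (pc, im, rm) = (Suc pc, im(a := k), rm)"
| "exec (IAdd a b c) d (pc, im, rm) = (Suc pc, im(a := im b + im c), rm)"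
| "exec (ISub a b c) d (pc, im, rm) = (Suc pc, im(a := im b - im c), rm)"
| "exec (ILoad a b) d (pc, im, rm) = (Suc pc, im(a := im (im b)), rm)"
| "exec (IStore a b) d (pc, im, rm) = (Suc pc, im(im a := im b), rm)"
| "exec (RConst a x) d (pc, im, rm) = (Suc pc, im, rm(a := x))"
| "exec (RAdd a b c) d (pc, im, rm) = (Suc pc, im, rm(a := rm b + rm c))"
| "exec (RSub a b c) d (pc, im, rm) = (Suc pc, im, rm(a := rm b - rm c))"
| "exec (RLoad a b) d (pc, im, rm) = (Suc pc, im, rm(a := rm (im b)))"
| "exec (RStore a b) d (pc, im, rm) = (Suc pc, im, rm(im a := rm b))"
| "exec (Dist a b c) d (pc, im, rm) = (Suc pc, im, rm(a := d (nat (im b)) (nat (im c))))"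
| "exec (IJumpLe a b t) d (pc, im, rm) = ((if im a \<le> im b then t else Suc pc), im, rm)"
| "exec (RJumpLe a b t) d (pc, im, rm) = ((if rm a \<le> rm b then t else Suc pc), im, rm)"
| "exec Halt d c = c"

definition halted :: "instr list \<Rightarrow> conf \<Rightarrow> bool" where
  "halted prog c \<longleftrightarrow> fst c \<ge> length prog \<or> prog ! fst c = Halt"

definition step :: "instr list \<Rightarrow> (nat \<Rightarrow> nat \<Rightarrow> real) \<Rightarrow> conf \<Rightarrow> conf" where
  "step prog d c = (if halted prog c then c else exec (prog ! fst c) d c)"

definition init :: "nat \<Rightarrow> conf" where
  "init n = (0, (\<lambda>a. if a = 0 then int n else 0), (\<lambda>_. 0))"

text \<open>Configuration after t steps (each instruction costs one time unit).\<close>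
definition run :: "instr list \<Rightarrow> (nat \<Rightarrow> nat \<Rightarrow> real) \<Rightarrow> nat \<Rightarrow> nat \<Rightarrow> conf" where
  "run prog d n t = (step prog d ^^ t) (init n)"

text \<open>Output convention: after halting, real cell i holds lambda_i and integer
  cell i holds j(i), for i in [1,n].\<close>
definition correct_output :: "(nat \<Rightarrow> nat \<Rightarrow> real) \<Rightarrow> nat \<Rightarrow> conf \<Rightarrow> bool" where
  "correct_output d n c \<longleftrightarrow>
     (\<forall>i\<in>{1..n}. snd (snd c) (int i) = lam d n i \<and>
        fst (snd c) (int i) \<in> {int i..int n} \<and>
        ecc d n i (nat (fst (snd c) (int i))) = lam d n i)"

end

theory Submission
  imports Defs
begin


definition S :: "(nat \<Rightarrow> nat \<Rightarrow> real) \<Rightarrow> nat \<Rightarrow> real" where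
  "S d k = (\<Sum>t\<in>{1..<k}. d t (Suc t))"

lemma S_Suc: "1 \<le> k \<Longrightarrow> S d (Suc k) = S d k + d k (Suc k)"
  unfolding S_def by (simp add: sum.atLeastLessThan_Suc)

lemma S_1: "S d 1 = 0" unfolding S_def by simp

context
  fixes d :: "nat \<Rightarrow> nat \<Rightarrow> real" and n :: nat
  assumes met: "metric_on d n"
begin

lemma d_sym: "i \<in> {1..n} \<Longrightarrow> j \<in> {1..n} \<Longrightarrow> d i j = d j i"
  using met unfolding metric_on_def by blast
lemma d_nn: "i \<in> {1..n} \<Longrightarrow> j \<in> {1..n} \<Longrightarrow> d i j \<ge> 0"
  using met unfolding metric_on_def by blast
lemma d_0: "i \<in> {1..n} \<Longrightarrow> d i i = 0"
  using met unfolding metric_on_def by blast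
lemma d_tri: "i \<in> {1..n} \<Longrightarrow> j \<in> {1..n} \<Longrightarrow> k \<in> {1..n} \<Longrightarrow> d i j \<le> d i k + d k j"
  using met unfolding metric_on_def by blast

lemma S_mono_Suc: "1 \<le> k \<Longrightarrow> k < n \<Longrightarrow> S d k \<le> S d (Suc k)"
  using d_nn[of k "Suc k"] by (simp add: S_Suc)

lemma S_mono: assumes "1 \<le> a" "a \<le> b" shows "b \<le> n \<Longrightarrow> S d a \<le> S d b"
  using assms(2) proof (induct b rule: dec_induct)
  case base then show ?case by simp
next
  case (step b) then show ?case using S_mono_Suc[of b] assms(1) by force
qed

lemma d_le_S: assumes "1 \<le> a" "a \<le> b" shows "b \<le> n \<Longrightarrow> d a b \<le> S d b - S d a"
  using assms(2) proof (induct b rule: dec_induct)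
  case base then show ?case using d_0[of a] assms by simp
next
  case (step b)
  have "d a (Suc b) \<le> d a b + d b (Suc b)" using d_tri[of a "Suc b" b] step assms by simp
  then show ?case using step S_Suc[of b d] assms by simp
qed

end


section \<open>Walks\<close>

lemma walk_len_snoc: "xs \<noteq> [] \<Longrightarrow> walk_len d (xs @ [v]) = walk_len d xs + d (last xs) v"
proof -
  assume ne: "xs \<noteq> []"
  then obtain l where l: "length xs = Suc l" by (cases xs) auto
  have "walk_len d (xs @ [v]) = (\<Sum>m<Suc l. d ((xs@[v]) ! m) ((xs@[v]) ! Suc m))"
    unfolding walk_len_def using l by simp
  also have "\<dots> = (\<Sum>m<l. d ((xs@[v]) ! m) ((xs@[v]) ! Suc m)) + d ((xs@[v]) ! l) ((xs@[v]) ! Suc l)"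
    by simp
  also have "(\<Sum>m<l. d ((xs@[v]) ! m) ((xs@[v]) ! Suc m)) = (\<Sum>m<l. d (xs ! m) (xs ! Suc m))"
    using l by (intro sum.cong) (auto simp: nth_append)
  also have "(xs@[v]) ! l = last xs" using l ne by (simp add: nth_append last_conv_nth)
  also have "(xs@[v]) ! Suc l = v" using l by (simp add: nth_append)
  finally show ?thesis unfolding walk_len_def using l by simp
qed

lemma is_walk_snoc: "is_walk E p u xs \<Longrightarrow> (u, v) \<in> E \<Longrightarrow> is_walk E p v (xs @ [v])"
proof -
  assume w: "is_walk E p u xs" and e: "(u, v) \<in> E"
  have ne: "xs \<noteq> []" and la: "last xs = u" using w unfolding is_walk_def by auto
  have "(\<forall>m. Suc m < length (xs @ [v]) \<longrightarrow> ((xs @ [v]) ! m, (xs @ [v]) ! Suc m) \<in> E)"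
  proof (intro allI impI)
    fix m assume m: "Suc m < length (xs @ [v])"
    show "((xs @ [v]) ! m, (xs @ [v]) ! Suc m) \<in> E"
    proof (cases "Suc m < length xs")
      case True
      then show ?thesis using w unfolding is_walk_def by (simp add: nth_append)
    next
      case False
      then have "Suc m = length xs" using m by simp
      then have "m = length xs - 1" by simp
      then show ?thesis using e la ne \<open>Suc m = length xs\<close> by (simp add: nth_append last_conv_nth)
    qed
  qed
  then show ?thesis using w ne unfolding is_walk_def by simp
qed

lemma is_walk_snocD: "is_walk E p v (xs @ [w]) \<Longrightarrow> xs \<noteq> [] \<Longrightarrow>
   is_walk E p (last xs) xs \<and> (last xs, w) \<in> E \<and> v = w"
proof -
  assume w: "is_walk E p v (xs @ [w])" and ne: "xs \<noteq> []"
  then obtain l where l: "length xs = Suc l" by (cases xs) auto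
  have 1: "\<forall>m. Suc m < length xs \<longrightarrow> (xs ! m, xs ! Suc m) \<in> E"
  proof (intro allI impI)
    fix m assume "Suc m < length xs"
    then have "Suc m < length (xs@[w])" by simp
    moreover have "\<forall>m. Suc m < length (xs@[w]) \<longrightarrow> ((xs@[w]) ! m, (xs@[w]) ! Suc m) \<in> E"
      using w unfolding is_walk_def by blast
    ultimately have "((xs@[w]) ! m, (xs@[w]) ! Suc m) \<in> E" by blast
    then show "(xs ! m, xs ! Suc m) \<in> E" using \<open>Suc m < length xs\<close> by (simp add: nth_append)
  qed
  have "\<forall>m. Suc m < length (xs@[w]) \<longrightarrow> ((xs@[w]) ! m, (xs@[w]) ! Suc m) \<in> E"
      using w unfolding is_walk_def by blast
  then have "((xs@[w]) ! l, (xs@[w]) ! Suc l) \<in> E" using l by simp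
  then have 2: "(last xs, w) \<in> E" using l ne by (simp add: nth_append last_conv_nth)
  show ?thesis using w ne 1 2 unfolding is_walk_def by simp
qed

lemma walk_pot:
  assumes E: "\<And>u v. (u, v) \<in> E \<Longrightarrow> f v \<le> f u + d u v"
  shows "is_walk E p q xs \<Longrightarrow> f q - f p \<le> walk_len d xs"
proof (induction xs arbitrary: q rule: rev_induct)
  case Nil then show ?case by (simp add: is_walk_def)
next
  case (snoc x xs)
  show ?case
  proof (cases "xs = []")
    case True
    then show ?thesis using snoc.prems by (auto simp: is_walk_def walk_len_def)
  next
    case False
    from is_walk_snocD[OF snoc.prems False] have h: "is_walk E p (last xs) xs" "(last xs, x) \<in> E" "q = x"
      by auto
    have "f (last xs) - f p \<le> walk_len d xs" using snoc.IH h by blast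
    then show ?thesis using E[OF h(2)] h(3) walk_len_snoc[OF False, of d x] by simp
  qed
qed

definition R :: "(nat \<Rightarrow> nat \<Rightarrow> real) \<Rightarrow> (nat \<times> nat) set \<Rightarrow> nat \<Rightarrow> nat \<Rightarrow> real \<Rightarrow> bool" where
  "R d E p q x \<longleftrightarrow> (\<exists>xs. is_walk E p q xs \<and> walk_len d xs = x)"

lemma R_0: "R d E p p 0"
  unfolding R_def by (rule exI[of _ "[p]"]) (simp add: is_walk_def walk_len_def)

lemma R_step: "R d E p u x \<Longrightarrow> (u, v) \<in> E \<Longrightarrow> R d E p v (x + d u v)"
  unfolding R_def
proof (elim exE conjE)
  fix xs assume w: "is_walk E p u xs" "walk_len d xs = x" and e: "(u, v) \<in> E"
  have ne: "xs \<noteq> []" and la: "last xs = u" using w unfolding is_walk_def by auto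
  show "\<exists>xs. is_walk E p v xs \<and> walk_len d xs = x + d u v"
    by (rule exI[of _ "xs @ [v]"]) (use is_walk_snoc[OF w(1) e] walk_len_snoc[OF ne] w la in auto)
qed

lemma graph_dist_eq:
  assumes "R d E p q x" and "\<And>xs. is_walk E p q xs \<Longrightarrow> x \<le> walk_len d xs"
  shows "graph_dist d E p q = x"
  unfolding graph_dist_def
  apply (rule cInf_eq_minimum)
  using assms unfolding R_def by auto


section \<open>Distances in G(i,j)\<close>

definition F :: "(nat \<Rightarrow> nat \<Rightarrow> real) \<Rightarrow> nat \<Rightarrow> nat \<Rightarrow> nat \<Rightarrow> real" where
  "F d i j k = (if k \<le> j then min (S d k - S d i) (d i j + S d j - S d k) else d i j + S d k - S d j)"

definition pot :: "(nat \<Rightarrow> nat \<Rightarrow> real) \<Rightarrow> nat \<Rightarrow> nat \<Rightarrow> nat \<Rightarrow> real" where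
  "pot d i j v = (if v \<le> i then S d i - S d v else F d i j v)"

lemma path_edge1: "1 \<le> k \<Longrightarrow> k < n \<Longrightarrow> (k, Suc k) \<in> G_edges n i j"
  unfolding G_edges_def path_edges_def by auto
lemma path_edge2: "1 \<le> k \<Longrightarrow> k < n \<Longrightarrow> (Suc k, k) \<in> G_edges n i j"
  unfolding G_edges_def path_edges_def by auto
lemma extra_edge: "Suc i < j \<Longrightarrow> (i, j) \<in> G_edges n i j"
  unfolding G_edges_def by auto
lemma G_edges_cases: "(u, v) \<in> G_edges n i j \<Longrightarrow>
   (1 \<le> u \<and> u < n \<and> v = Suc u) \<or> (1 \<le> v \<and> v < n \<and> u = Suc v) \<or>
   (Suc i < j \<and> ((u = i \<and> v = j) \<or> (u = j \<and> v = i)))"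
  unfolding G_edges_def path_edges_def by (auto split: if_splits)

context
  fixes d :: "nat \<Rightarrow> nat \<Rightarrow> real" and n :: nat
  assumes met: "metric_on d n"
begin

lemma pot_edge:
  assumes ij: "1 \<le> i" "i \<le> j" "j \<le> n" and e: "(u, v) \<in> G_edges n i j"
  shows "pot d i j v \<le> pot d i j u + d u v"
proof -
  have Si: "S d i \<le> S d j" using S_mono[OF met ij(1,2,3)] .
  have eS: "d i j \<le> S d j - S d i" using d_le_S[OF met ij] .
  have en: "d i j \<ge> 0" using d_nn[OF met, of i j] ij by auto
  have lip: "\<bar>pot d i j (Suc k) - pot d i j k\<bar> \<le> d k (Suc k)" if k: "1 \<le> k" "k < n" for k
  proof -
    have Sk: "S d (Suc k) = S d k + d k (Suc k)" using S_Suc[OF k(1)] .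
    have dk: "d k (Suc k) \<ge> 0" using d_nn[OF met, of k "Suc k"] k by auto
    consider "Suc k \<le> i" | "k = i" | "i < k" "Suc k \<le> j" | "k = j" "i < k" | "j < k" "i < k" by linarith
    then show ?thesis
    proof cases
      case 1 then show ?thesis unfolding pot_def using Sk dk by auto
    next
      case 2
      show ?thesis
      proof (cases "Suc i \<le> j")
        case True
        have "S d (Suc i) \<le> S d j" using S_mono[OF met _ True ij(3)] by simp
        then show ?thesis unfolding pot_def F_def using 2 Sk dk en True by (auto simp: min_def)
      next
        case False
        then have "j = i" using ij by simp
        then show ?thesis unfolding pot_def F_def using 2 Sk dk d_0[OF met, of i] ij by auto
      qed
    next
      case 3 then show ?thesis unfolding pot_def F_def using Sk dk by (auto simp: min_def)
    next
      case 4 then show ?thesis unfolding pot_def F_def using Sk dk eS by (auto simp: min_def)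
    next
      case 5 then show ?thesis unfolding pot_def F_def using Sk dk by (auto simp: min_def)
    qed
  qed
  from G_edges_cases[OF e] consider "1 \<le> u \<and> u < n \<and> v = Suc u" | "1 \<le> v \<and> v < n \<and> u = Suc v"
    | "Suc i < j \<and> ((u = i \<and> v = j) \<or> (u = j \<and> v = i))" by blast
  then show ?thesis
  proof cases
    case 1 then show ?thesis using lip[of u] by auto
  next
    case 2 then show ?thesis using lip[of v] d_sym[OF met, of v u] by auto
  next
    case 3
    have pi: "pot d i j i = 0" unfolding pot_def by simp
    have pj: "pot d i j j = d i j" unfolding pot_def F_def using 3 eS by (auto simp: min_def)
    show ?thesis using 3 pi pj en d_sym[OF met, of i j] ij by auto
  qed
qed

lemma R_forward: assumes "1 \<le> a" "a \<le> b" shows "b \<le> n \<Longrightarrow> R d E p a x \<Longrightarrow>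
   (\<And>k. a \<le> k \<Longrightarrow> k < b \<Longrightarrow> (k, Suc k) \<in> E) \<Longrightarrow> R d E p b (x + S d b - S d a)"
  using assms(2) proof (induct b rule: dec_induct)
  case base then show ?case by simp
next
  case (step b)
  have "R d E p b (x + S d b - S d a)" using step by auto
  from R_step[OF this, of "Suc b"] step have "R d E p (Suc b) (x + S d b - S d a + d b (Suc b))" by auto
  then show ?case using S_Suc[of b d] step assms by (simp add: algebra_simps)
qed

lemma R_backward: assumes "1 \<le> a" "a \<le> b" shows "b \<le> n \<Longrightarrow> R d E p b x \<Longrightarrow>
   (\<And>k. a \<le> k \<Longrightarrow> k < b \<Longrightarrow> (Suc k, k) \<in> E) \<Longrightarrow> R d E p a (x + S d b - S d a)"
  using assms(2) proof (induct a rule: inc_induct)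
  case base then show ?case by simp
next
  case (step a)
  have "R d E p (Suc a) (x + S d b - S d (Suc a))" using step by auto
  from R_step[OF this, of a] step have "R d E p a (x + S d b - S d (Suc a) + d (Suc a) a)" by auto
  moreover have "d (Suc a) a = d a (Suc a)" using d_sym[OF met, of a "Suc a"] step assms by auto
  ultimately show ?case using S_Suc[of a d] step assms by (simp add: algebra_simps)
qed

lemma dG_eq:
  assumes ij: "1 \<le> i" "i \<le> j" "j \<le> n" and k: "i \<le> k" "k \<le> n"
  shows "dG d n i j i k = F d i j k"
proof -
  let ?E = "G_edges n i j"
  have eS: "d i j \<le> S d j - S d i" using d_le_S[OF met ij] .
  have pe: "(ka, Suc ka) \<in> ?E" if "i \<le> ka" "ka < k" for ka
    using path_edge1[of ka n i j] ij k that by auto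
  have f: "R d ?E i k (S d k - S d i)"
    using R_forward[OF ij(1) k(1) k(2) R_0[of d ?E i] pe] by simp
  have Rj: "R d ?E i j (d i j)"
  proof (cases "Suc i < j")
    case True
    from R_step[OF R_0 extra_edge[OF True, of n]] show ?thesis by simp
  next
    case False
    then have "j = i \<or> j = Suc i" using ij by auto
    then show ?thesis
    proof
      assume "j = i" then show ?thesis using R_0[of d ?E i] d_0[OF met, of i] ij by simp
    next
      assume js: "j = Suc i"
      from R_step[OF R_0 path_edge1[of i n i j]] js ij show ?thesis by simp
    qed
  qed
  have b: "R d ?E i k (d i j + S d j - S d k)" if "k \<le> j"
    using R_backward[OF _ that ij(3) Rj] path_edge2[of _ n i j] ij k by auto
  have c: "R d ?E i k (d i j + S d k - S d j)" if "j \<le> k"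
    using R_forward[OF _ that k(2) Rj] path_edge1[of _ n i j] ij k by auto
  have RF: "R d ?E i k (F d i j k)"
    unfolding F_def using f b c by (auto simp: min_def)
  have lb: "F d i j k \<le> walk_len d xs" if "is_walk ?E i k xs" for xs
  proof -
    have "pot d i j k - pot d i j i \<le> walk_len d xs"
      by (rule walk_pot[OF pot_edge[OF ij] that]) 
    moreover have "pot d i j i = 0" unfolding pot_def by simp
    moreover have "pot d i j k = F d i j k"
    proof (cases "k \<le> i")
      case True then have "k = i" using k by simp
      then show ?thesis unfolding pot_def F_def using ij eS S_mono[OF met ij] d_nn[OF met, of i j]
        by (auto simp: min_def)
    qed (simp add: pot_def)
    ultimately show ?thesis by simp
  qed
  show ?thesis unfolding dG_def by (rule graph_dist_eq[OF RF lb])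
qed

end


section \<open>Algorithmic characterisation\<close>

definition tt :: "(nat \<Rightarrow> nat \<Rightarrow> real) \<Rightarrow> nat \<Rightarrow> nat \<Rightarrow> nat \<Rightarrow> real" where
  "tt d i j k = min (S d k - S d i) (d i j + S d j - S d k)"

definition gg :: "(nat \<Rightarrow> nat \<Rightarrow> real) \<Rightarrow> nat \<Rightarrow> nat \<Rightarrow> real" where
  "gg d i j = Max (tt d i j ` {i..j})"

definition hh :: "(nat \<Rightarrow> nat \<Rightarrow> real) \<Rightarrow> nat \<Rightarrow> nat \<Rightarrow> nat \<Rightarrow> real" where
  "hh d n i j = d i j + S d n - S d j"

definition TT :: "(nat \<Rightarrow> nat \<Rightarrow> real) \<Rightarrow> nat \<Rightarrow> nat \<Rightarrow> real" where
  "TT d i j = S d i + S d j + d i j"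

lemma mono_chain:
  fixes f :: "nat \<Rightarrow> real"
  assumes st: "\<And>k. a \<le> k \<Longrightarrow> k < b \<Longrightarrow> f k \<le> f (Suc k)" and ax: "a \<le> x" and xy: "x \<le> y"
  shows "y \<le> b \<Longrightarrow> f x \<le> f y"
  using xy proof (induct y rule: dec_induct)
  case base then show ?case by simp
next
  case (step y) then show ?case using st[of y] ax by force
qed

lemma gg_ge: "i \<le> k \<Longrightarrow> k \<le> j \<Longrightarrow> tt d i j k \<le> gg d i j"
  unfolding gg_def by (rule Max_ge) auto

lemma gg_in: "i \<le> j \<Longrightarrow> \<exists>k\<in>{i..j}. gg d i j = tt d i j k"
proof -
  assume "i \<le> j"
  then have "gg d i j \<in> tt d i j ` {i..j}" unfolding gg_def by (intro Max_in) auto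
  then show ?thesis by auto
qed

context
  fixes d :: "nat \<Rightarrow> nat \<Rightarrow> real" and n :: nat
  assumes met: "metric_on d n"
begin

lemma ecc_eq:
  assumes ij: "1 \<le> i" "i \<le> j" "j \<le> n"
  shows "ecc d n i j = max (gg d i j) (hh d n i j)"
proof -
  have eS: "d i j \<le> S d j - S d i" using d_le_S[OF met ij] .
  have "ecc d n i j = Max (F d i j ` {i..n})"
    unfolding ecc_def using dG_eq[OF met ij] by (intro arg_cong[where f=Max] image_cong) auto
  also have "\<dots> = max (gg d i j) (hh d n i j)"
  proof (rule Max_eqI)
    show "finite (F d i j ` {i..n})" by simp
  next
    fix y assume "y \<in> F d i j ` {i..n}"
    then obtain k where k: "k \<in> {i..n}" "y = F d i j k" by auto
    show "y \<le> max (gg d i j) (hh d n i j)"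
    proof (cases "k \<le> j")
      case True
      then have "y = tt d i j k" using k unfolding F_def tt_def by simp
      then show ?thesis using gg_ge[of i k j d] k True by simp
    next
      case False
      have "S d k \<le> S d n" using S_mono[OF met, of k n] k ij by auto
      then show ?thesis using k False unfolding F_def hh_def by simp
    qed
  next
    show "max (gg d i j) (hh d n i j) \<in> F d i j ` {i..n}"
    proof (cases "hh d n i j \<le> gg d i j")
      case True
      obtain k where k: "k \<in> {i..j}" "gg d i j = tt d i j k" using gg_in[OF ij(2)] by blast
      then have "F d i j k = gg d i j" unfolding F_def tt_def by simp
      then show ?thesis using k True ij by (auto intro!: image_eqI[of _ _ k])
    next
      case False
      have jn: "j < n"
      proof (rule ccontr)
        assume "\<not> j < n" then have "j = n" using ij by simp
        then have "hh d n i j = tt d i j j" unfolding hh_def tt_def using eS by (simp add: min_def)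
        then show False using False gg_ge[of i j j d] ij by simp
      qed
      then have "F d i j n = hh d n i j" unfolding F_def hh_def by simp
      then show ?thesis using False ij jn by (auto intro!: image_eqI[of _ _ n])
    qed
  qed
  finally show ?thesis .
qed

lemma gg_m:
  assumes ij: "1 \<le> i" "i \<le> m" "m \<le> j" "j \<le> n"
    and lt: "\<forall>k\<in>{i..<m}. S d k + S d k < TT d i j" and ge: "TT d i j \<le> S d m + S d m"
  shows "gg d i j = (if m \<le> i then d i j + S d j - S d m
                    else max (d i j + S d j - S d m) (S d (m - 1) - S d i))"
    (is "_ = ?v")
  unfolding gg_def
proof (rule Max_eqI)
  show "finite (tt d i j ` {i..j})" by simp
next
  fix y assume "y \<in> tt d i j ` {i..j}"
  then obtain k where k: "k \<in> {i..j}" "y = tt d i j k" by auto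
  show "y \<le> ?v"
  proof (cases "k < m")
    case True
    then have "S d k + S d k < TT d i j" using lt k by auto
    then have "y = S d k - S d i" using k unfolding tt_def TT_def by auto
    moreover have "S d k \<le> S d (m - 1)" using S_mono[OF met, of k "m - 1"] k True ij by auto
    ultimately show ?thesis using True k by auto
  next
    case False
    have "S d m \<le> S d k" using S_mono[OF met, of m k] k False ij by auto
    then have "y \<le> d i j + S d j - S d m" using k unfolding tt_def by auto
    then show ?thesis by auto
  qed
next
  have tm: "tt d i j m = d i j + S d j - S d m" using ge unfolding tt_def TT_def by auto
  show "?v \<in> tt d i j ` {i..j}"
  proof (cases "m \<le> i")
    case True then show ?thesis using tm ij by (auto intro!: image_eqI[of _ _ m])
  next
    case False
    have "m - 1 \<in> {i..<m}" using False by auto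
    then have "S d (m - 1) + S d (m - 1) < TT d i j" using lt by blast
    then have "tt d i j (m - 1) = S d (m - 1) - S d i" unfolding tt_def TT_def by auto
    show ?thesis
    proof (cases "S d (m - 1) - S d i \<le> d i j + S d j - S d m")
      case True
      then have "?v = tt d i j m" using False tm by simp
      then show ?thesis using ij by auto
    next
      case c2: False
      then have "?v = tt d i j (m - 1)" using False \<open>tt d i j (m - 1) = _\<close> by simp
      moreover have "m - 1 \<in> {i..j}" using ij False by auto
      ultimately show ?thesis by (metis image_eqI)
    qed
  qed
qed

end


context
  fixes d :: "nat \<Rightarrow> nat \<Rightarrow> real" and n :: nat
  assumes met: "metric_on d n"
begin

lemma hh_step: assumes "1 \<le> i" "i \<le> j" "j < n" shows "hh d n i (Suc j) \<le> hh d n i j"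
proof -
  have "d i (Suc j) \<le> d i j + d j (Suc j)" using d_tri[OF met, of i "Suc j" j] assms by auto
  then show ?thesis unfolding hh_def using S_Suc[of j d] assms by simp
qed

lemma gg_step: assumes "1 \<le> i" "i \<le> j" "j < n" shows "gg d i j \<le> gg d i (Suc j)"
proof -
  obtain k where k: "k \<in> {i..j}" "gg d i j = tt d i j k" using gg_in[OF assms(2)] by blast
  have "d i j \<le> d i (Suc j) + d (Suc j) j" using d_tri[OF met, of i j "Suc j"] assms by auto
  moreover have "d (Suc j) j = d j (Suc j)" using d_sym[OF met, of "Suc j" j] assms by auto
  ultimately have "tt d i j k \<le> tt d i (Suc j) k" unfolding tt_def using S_Suc[of j d] assms
    by (auto simp: min_def)
  also have "\<dots> \<le> gg d i (Suc j)" using gg_ge[of i k "Suc j" d] k by auto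
  finally show ?thesis using k by simp
qed

lemma D_step: assumes "1 \<le> i" "i < j" "j \<le> n"
  shows "gg d (Suc i) j - hh d n (Suc i) j \<le> gg d i j - hh d n i j"
proof -
  obtain k where k: "k \<in> {Suc i..j}" "gg d (Suc i) j = tt d (Suc i) j k" using gg_in[of "Suc i" j d] assms by auto
  have tri: "d i j \<le> d i (Suc i) + d (Suc i) j" using d_tri[OF met, of i j "Suc i"] assms by auto
  have "tt d (Suc i) j k \<le> tt d i j k + (d (Suc i) j - d i j)"
    unfolding tt_def using S_Suc[of i d] assms tri by (auto simp: min_def)
  also have "tt d i j k \<le> gg d i j" using gg_ge[of i k j d] k by auto
  finally show ?thesis using k unfolding hh_def by simp
qed

lemma TT_step_j: assumes "1 \<le> i" "i \<le> n" "1 \<le> j" "j < n" shows "TT d i j \<le> TT d i (Suc j)"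
proof -
  have "d i j \<le> d i (Suc j) + d (Suc j) j" using d_tri[OF met, of i j "Suc j"] assms by auto
  moreover have "d (Suc j) j = d j (Suc j)" using d_sym[OF met, of "Suc j" j] assms by auto
  ultimately show ?thesis unfolding TT_def using S_Suc[of j d] assms by simp
qed

lemma TT_step_i: assumes "1 \<le> i" "i < n" "1 \<le> j" "j \<le> n" shows "TT d i j \<le> TT d (Suc i) j"
proof -
  have "d i j \<le> d i (Suc i) + d (Suc i) j" using d_tri[OF met, of i j "Suc i"] assms by auto
  then show ?thesis unfolding TT_def using S_Suc[of i d] assms by simp
qed

lemma TT_mono_j: assumes "1 \<le> i" "i \<le> n" "1 \<le> j" "j \<le> j'" "j' \<le> n" shows "TT d i j \<le> TT d i j'"
  by (rule mono_chain[of 1 n "TT d i"]) (use TT_step_j assms in auto)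

lemma hh_le_gg_n: assumes "1 \<le> i" "i \<le> n" shows "hh d n i n \<le> gg d i n"
proof -
  have "d i n \<le> S d n - S d i" using d_le_S[OF met assms(1,2)] by simp
  then have "hh d n i n = tt d i n n" unfolding hh_def tt_def by (simp add: min_def)
  then show ?thesis using gg_ge[of i n n d] assms by simp
qed

lemma lam_char:
  assumes ic: "1 \<le> i" "i \<le> c" "c \<le> n"
    and below: "\<forall>j\<in>{i..<c}. gg d i j < hh d n i j" and at: "hh d n i c \<le> gg d i c"
  shows "lam d n i = (if i < c \<and> \<not> gg d i c \<le> hh d n i (c - 1) then hh d n i (c - 1) else gg d i c)
     \<and> ecc d n i (if i < c \<and> \<not> gg d i c \<le> hh d n i (c - 1) then c - 1 else c)
         = (if i < c \<and> \<not> gg d i c \<le> hh d n i (c - 1) then hh d n i (c - 1) else gg d i c)"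
proof -
  have eccc: "ecc d n i c = gg d i c" using ecc_eq[OF met ic] at by simp
  have lowj: "ecc d n i j = hh d n i j \<and> hh d n i (c - 1) \<le> hh d n i j" if j: "i \<le> j" "j < c" for j
  proof
    have "gg d i j < hh d n i j" using below j by auto
    then show "ecc d n i j = hh d n i j" using ecc_eq[OF met ic(1), of j] j ic by (simp add: max_def)
    have st: "- hh d n i k \<le> - hh d n i (Suc k)" if "i \<le> k" "k < c - 1" for k
      using hh_step[of i k] ic that by simp
    have "- hh d n i j \<le> - hh d n i (c - 1)"
      by (rule mono_chain[of i "c - 1" "\<lambda>k. - hh d n i k", OF st]) (use j in simp_all)
    then show "hh d n i (c - 1) \<le> hh d n i j" by simp
  qed
  have highj: "gg d i c \<le> ecc d n i j" if j: "c \<le> j" "j \<le> n" for j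
  proof -
    have st: "gg d i k \<le> gg d i (Suc k)" if "c \<le> k" "k < n" for k
      using gg_step[of i k] ic that by simp
    have "gg d i c \<le> gg d i j"
      by (rule mono_chain[of c n "gg d i", OF st]) (use j in simp_all)
    moreover have "gg d i j \<le> ecc d n i j" using ecc_eq[OF met ic(1), of j] j ic by simp
    ultimately show ?thesis by simp
  qed
  have key: "lam d n i = v \<and> ecc d n i w = v"
    if w: "w \<in> {i..n}" "ecc d n i w = v" and lb: "\<And>j. j \<in> {i..n} \<Longrightarrow> v \<le> ecc d n i j" for v w
  proof -
    have "lam d n i = v" unfolding lam_def
    proof (rule Min_eqI)
      show "finite (ecc d n i ` {i..n})" by simp
    next
      fix y assume "y \<in> ecc d n i ` {i..n}" then show "v \<le> y" using lb by auto
    next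
      show "v \<in> ecc d n i ` {i..n}" using w by (metis image_eqI)
    qed
    then show ?thesis using w by simp
  qed
  show ?thesis
  proof (cases "i < c \<and> \<not> gg d i c \<le> hh d n i (c - 1)")
    case True
    have "i \<le> c - 1" "c - 1 < c" using True by auto
    then have 1: "ecc d n i (c - 1) = hh d n i (c - 1)" using lowj[of "c - 1"] by blast
    have 2: "hh d n i (c - 1) \<le> ecc d n i j" if "j \<in> {i..n}" for j
    proof (cases "j < c")
      case True then show ?thesis using lowj[of j] that by simp
    next
      case False then show ?thesis using highj[of j] that \<open>i < c \<and> _\<close> by simp
    qed
    have "c - 1 \<in> {i..n}" using True ic by auto
    from key[OF this 1 2] True show ?thesis by simp
  next
    case False
    have 2: "gg d i c \<le> ecc d n i j" if "j \<in> {i..n}" for j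
    proof (cases "j < c")
      case True
      then have "i < c" using that by simp
      then have "gg d i c \<le> hh d n i (c - 1)" using False by simp
      then show ?thesis using lowj[of j] that True by simp
    next
      case False then show ?thesis using highj[of j] that by simp
    qed
    have "c \<in> {i..n}" using ic by simp
    from key[OF this eccc 2] False show ?thesis by auto
  qed
qed


end



definition prog :: "instr list" where
"prog = [
 IConst (-5) 1,
 IConst (-6) (-20),
 IConst (-4) 1,
 IJumpLe 0 (-4) 13,
 ISub (-7) (-6) (-4),
 RLoad (-6) (-7),
 IAdd (-9) (-4) (-5),
 Dist (-7) (-4) (-9),
 RAdd (-6) (-6) (-7),
 ISub (-7) (-6) (-9),
 RStore (-7) (-6),
 IAdd (-4) (-4) (-5),
 IJumpLe (-4) (-4) 3,
 ISub (-7) (-6) 0,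
 RLoad (-8) (-7),
 IConst (-1) 1,
 IConst (-2) 1,
 IConst (-3) 1,
 IJumpLe (-1) 0 20,
 Halt,
 IJumpLe (-1) (-2) 22,
 IAdd (-2) (-1) (-10),
 Dist (-1) (-1) (-2),
 ISub (-7) (-6) (-1),
 RLoad (-6) (-7),
 ISub (-7) (-6) (-2),
 RLoad (-7) (-7),
 RAdd (-2) (-6) (-7),
 RAdd (-2) (-2) (-1),
 IJumpLe (-1) (-3) 31,
 IAdd (-3) (-1) (-10),
 ISub (-7) (-6) (-3),
 RLoad (-9) (-7),
 RAdd (-3) (-9) (-9),
 RJumpLe (-2) (-3) 37,
 IAdd (-3) (-3) (-5),
 IJumpLe (-3) (-3) 31,
 RSub (-4) (-7) (-9),
 RAdd (-4) (-4) (-1),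
 IJumpLe (-3) (-1) 46,
 ISub (-9) (-3) (-5),
 ISub (-7) (-6) (-9),
 RLoad (-10) (-7),
 RSub (-10) (-10) (-6),
 RJumpLe (-10) (-4) 46,
 RAdd (-4) (-10) (-11),
 RSub (-5) (-8) (-7),
 RAdd (-5) (-5) (-1),
 RJumpLe (-5) (-4) 51,
 IAdd (-2) (-2) (-5),
 IJumpLe (-2) (-2) 22,
 IJumpLe (-2) (-1) 62,
 ISub (-9) (-2) (-5),
 Dist (-10) (-1) (-9),
 ISub (-7) (-6) (-9),
 RLoad (-7) (-7),
 RSub (-5) (-8) (-7),
 RAdd (-5) (-5) (-10),
 RJumpLe (-4) (-5) 62,
 RStore (-1) (-5),
 IStore (-1) (-9),
 IJumpLe (-1) (-1) 64,
 RStore (-1) (-4),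
 IStore (-1) (-2),
 IAdd (-1) (-1) (-5),
 IJumpLe (-1) (-1) 18
]"

lemma len_prog: "length prog = 66" by (simp add: prog_def)

lemma prog_nth [simp]:
  "prog ! 0 = IConst (-5) 1"
  "prog ! 1 = IConst (-6) (-20)"
  "prog ! 2 = IConst (-4) 1"
  "prog ! 3 = IJumpLe 0 (-4) 13"
  "prog ! 4 = ISub (-7) (-6) (-4)"
  "prog ! 5 = RLoad (-6) (-7)"
  "prog ! 6 = IAdd (-9) (-4) (-5)"
  "prog ! 7 = Dist (-7) (-4) (-9)"
  "prog ! 8 = RAdd (-6) (-6) (-7)"
  "prog ! 9 = ISub (-7) (-6) (-9)"
  "prog ! 10 = RStore (-7) (-6)"
  "prog ! 11 = IAdd (-4) (-4) (-5)"
  "prog ! 12 = IJumpLe (-4) (-4) 3"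
  "prog ! 13 = ISub (-7) (-6) 0"
  "prog ! 14 = RLoad (-8) (-7)"
  "prog ! 15 = IConst (-1) 1"
  "prog ! 16 = IConst (-2) 1"
  "prog ! 17 = IConst (-3) 1"
  "prog ! 18 = IJumpLe (-1) 0 20"
  "prog ! 19 = Halt"
  "prog ! 20 = IJumpLe (-1) (-2) 22"
  "prog ! 21 = IAdd (-2) (-1) (-10)"
  "prog ! 22 = Dist (-1) (-1) (-2)"
  "prog ! 23 = ISub (-7) (-6) (-1)"
  "prog ! 24 = RLoad (-6) (-7)"
  "prog ! 25 = ISub (-7) (-6) (-2)"
  "prog ! 26 = RLoad (-7) (-7)"
  "prog ! 27 = RAdd (-2) (-6) (-7)"
  "prog ! 28 = RAdd (-2) (-2) (-1)"
  "prog ! 29 = IJumpLe (-1) (-3) 31"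
  "prog ! 30 = IAdd (-3) (-1) (-10)"
  "prog ! 31 = ISub (-7) (-6) (-3)"
  "prog ! 32 = RLoad (-9) (-7)"
  "prog ! 33 = RAdd (-3) (-9) (-9)"
  "prog ! 34 = RJumpLe (-2) (-3) 37"
  "prog ! 35 = IAdd (-3) (-3) (-5)"
  "prog ! 36 = IJumpLe (-3) (-3) 31"
  "prog ! 37 = RSub (-4) (-7) (-9)"
  "prog ! 38 = RAdd (-4) (-4) (-1)"
  "prog ! 39 = IJumpLe (-3) (-1) 46"
  "prog ! 40 = ISub (-9) (-3) (-5)"
  "prog ! 41 = ISub (-7) (-6) (-9)"
  "prog ! 42 = RLoad (-10) (-7)"
  "prog ! 43 = RSub (-10) (-10) (-6)"
  "prog ! 44 = RJumpLe (-10) (-4) 46"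
  "prog ! 45 = RAdd (-4) (-10) (-11)"
  "prog ! 46 = RSub (-5) (-8) (-7)"
  "prog ! 47 = RAdd (-5) (-5) (-1)"
  "prog ! 48 = RJumpLe (-5) (-4) 51"
  "prog ! 49 = IAdd (-2) (-2) (-5)"
  "prog ! 50 = IJumpLe (-2) (-2) 22"
  "prog ! 51 = IJumpLe (-2) (-1) 62"
  "prog ! 52 = ISub (-9) (-2) (-5)"
  "prog ! 53 = Dist (-10) (-1) (-9)"
  "prog ! 54 = ISub (-7) (-6) (-9)"
  "prog ! 55 = RLoad (-7) (-7)"
  "prog ! 56 = RSub (-5) (-8) (-7)"
  "prog ! 57 = RAdd (-5) (-5) (-10)"
  "prog ! 58 = RJumpLe (-4) (-5) 62"
  "prog ! 59 = RStore (-1) (-5)"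
  "prog ! 60 = IStore (-1) (-9)"
  "prog ! 61 = IJumpLe (-1) (-1) 64"
  "prog ! 62 = RStore (-1) (-4)"
  "prog ! 63 = IStore (-1) (-2)"
  "prog ! 64 = IAdd (-1) (-1) (-5)"
  "prog ! 65 = IJumpLe (-1) (-1) 18"
  by (simp_all add: prog_def)

lemma step_eq: "p < 66 \<Longrightarrow> step prog d (p, im, rm) = (if prog ! p = Halt then (p, im, rm) else exec (prog ! p) d (p, im, rm))"
  by (simp add: step_def halted_def len_prog)

lemma funpow_Suc': "(f ^^ Suc k) x = (f ^^ k) (f x)" by (simp add: funpow_Suc_right del: funpow.simps)
lemma funpow_num: "(f ^^ numeral k) x = (f ^^ pred_numeral k) (f x)"
  by (simp add: numeral_eq_Suc funpow_Suc' del: funpow.simps)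

definition Mem2 :: "(nat \<Rightarrow> nat \<Rightarrow> real) \<Rightarrow> nat \<Rightarrow> (int \<Rightarrow> int) \<Rightarrow> (int \<Rightarrow> real) \<Rightarrow> bool" where
  "Mem2 d n im rm \<longleftrightarrow> im 0 = int n \<and> im (-5) = 1 \<and> im (-6) = -20 \<and> im (-10) = 0 \<and>
     rm (-11) = 0 \<and> rm (-8) = S d n \<and> (\<forall>k\<in>{1..n}. rm (-20 - int k) = S d k)"

lemma Mem2_im_upd [simp]: "a \<noteq> 0 \<Longrightarrow> a \<noteq> -5 \<Longrightarrow> a \<noteq> -6 \<Longrightarrow> a \<noteq> -10 \<Longrightarrow>
   Mem2 d n (im(a := v)) rm = Mem2 d n im rm"
  unfolding Mem2_def by auto

lemma Mem2_rm_upd [simp]: "-12 < a \<Longrightarrow> a \<noteq> -8 \<Longrightarrow> a \<noteq> -11 \<Longrightarrow>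
   Mem2 d n im (rm(a := v)) = Mem2 d n im rm"
  unfolding Mem2_def by auto

lemma Mem2_S: "Mem2 d n im rm \<Longrightarrow> 1 \<le> k \<Longrightarrow> k \<le> n \<Longrightarrow> rm (-20 - int k) = S d k"
  unfolding Mem2_def by auto

definition Out :: "(nat \<Rightarrow> nat \<Rightarrow> real) \<Rightarrow> nat \<Rightarrow> nat \<Rightarrow> (int \<Rightarrow> int) \<Rightarrow> (int \<Rightarrow> real) \<Rightarrow> bool" where
  "Out d n i im rm \<longleftrightarrow> (\<forall>i'\<in>{1..<i}. rm (int i') = lam d n i' \<and> int i' \<le> im (int i') \<and>
       im (int i') \<le> int n \<and> ecc d n i' (nat (im (int i'))) = lam d n i')"

lemma Out_im_upd [simp]: "a < 1 \<Longrightarrow> Out d n i (im(a := v)) rm = Out d n i im rm"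
  unfolding Out_def by auto
lemma Out_rm_upd [simp]: "a < 1 \<Longrightarrow> Out d n i im (rm(a := v)) = Out d n i im rm"
  unfolding Out_def by auto


lemma reach_trans: "(f ^^ t1) a = b \<Longrightarrow> (f ^^ t2) b = c \<Longrightarrow> (f ^^ (t1 + t2)) a = c"
proof -
  have "(f ^^ (t1 + t2)) a = (f ^^ t2) ((f ^^ t1) a)" by (metis add.commute funpow_add comp_apply)
  then show "(f ^^ t1) a = b \<Longrightarrow> (f ^^ t2) b = c \<Longrightarrow> (f ^^ (t1 + t2)) a = c" by simp
qed

abbreviation "frame im rm im' rm' \<equiv> (\<forall>a>0. im' a = im a \<and> rm' a = rm a)"

lemma segA:
  assumes M: "Mem2 d n im rm" and r: "im (-1) = int i" "im (-2) = int c" "im (-3) = int m"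
    and ic: "1 \<le> i" "i \<le> c" "c \<le> n"
  shows "\<exists>t im' rm'. (step prog d ^^ t) (22, im, rm) = (31, im', rm') \<and> t \<le> 9 \<and> Mem2 d n im' rm' \<and>
     im' (-1) = int i \<and> im' (-2) = int c \<and> im' (-3) = int (max m i) \<and> rm' (-1) = d i c \<and>
     rm' (-2) = TT d i c \<and> rm' (-6) = S d i \<and> rm' (-7) = S d c \<and> frame im rm im' rm'"
proof -
  have si: "rm (-20 - int i) = S d i" using Mem2_S[OF M, of i] ic by simp
  have sc: "rm (-20 - int c) = S d c" using Mem2_S[OF M, of c] ic by simp
  show ?thesis
  proof (cases "i \<le> m")
    case True
    show ?thesis
      by (rule exI[of _ 8]) (use M r si sc True in \<open>simp add: funpow_num step_eq TT_def Mem2_def max_def\<close>)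
  next
    case False
    show ?thesis
      by (rule exI[of _ 9]) (use M r si sc False in \<open>simp add: funpow_num step_eq TT_def Mem2_def max_def\<close>)
  qed
qed

lemma segM1_stop:
  assumes M: "Mem2 d n im rm" and r: "im (-3) = int m" "rm (-2) = TT d i c" 
    and mc: "1 \<le> m" "m \<le> n" and ge: "TT d i c \<le> S d m + S d m"
  shows "(step prog d ^^ 4) (31, im, rm) = (37, im(-7 := -20 - int m), rm(-9 := S d m, -3 := S d m + S d m))"
proof -
  have sm: "rm (-20 - int m) = S d m" using Mem2_S[OF M, of m] mc by simp
  show ?thesis using M r sm ge by (simp add: funpow_num step_eq Mem2_def)
qed

lemma segM1_go:
  assumes M: "Mem2 d n im rm" and r: "im (-3) = int m" "rm (-2) = TT d i c" 
    and mc: "1 \<le> m" "m \<le> n" and lt: "\<not> TT d i c \<le> S d m + S d m"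
  shows "(step prog d ^^ 6) (31, im, rm) = (31, im(-7 := -20 - int m, -3 := int m + 1), rm(-9 := S d m, -3 := S d m + S d m))"
proof -
  have sm: "rm (-20 - int m) = S d m" using Mem2_S[OF M, of m] mc by simp
  show ?thesis using M r sm lt by (simp add: funpow_num step_eq Mem2_def)
qed


lemma segM:
  assumes M: "Mem2 d n im rm" and r: "im (-1) = int i" "im (-2) = int c" "im (-3) = int m"
    "rm (-1) = e" "rm (-2) = TT d i c" "rm (-6) = S d i" "rm (-7) = S d c"
    and ic: "1 \<le> i" "i \<le> m" "m \<le> c" "c \<le> n"
    and lt: "\<forall>k\<in>{i..<m}. S d k + S d k < TT d i c" and top: "TT d i c \<le> S d c + S d c"
  shows "\<exists>t im' rm' m'. (step prog d ^^ t) (31, im, rm) = (37, im', rm') \<and> m \<le> m' \<and> m' \<le> c \<and>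
     (\<forall>k\<in>{i..<m'}. S d k + S d k < TT d i c) \<and> TT d i c \<le> S d m' + S d m' \<and> t + 6 * m \<le> 6 * m' + 4 \<and>
     Mem2 d n im' rm' \<and> im' (-1) = int i \<and> im' (-2) = int c \<and> im' (-3) = int m' \<and>
     rm' (-1) = e \<and> rm' (-2) = TT d i c \<and> rm' (-6) = S d i \<and> rm' (-7) = S d c \<and> rm' (-9) = S d m' \<and>
     frame im rm im' rm'"
  using assms
proof (induction "c - m" arbitrary: m im rm rule: less_induct)
  case less
  show ?case
  proof (cases "TT d i c \<le> S d m + S d m")
    case True
    have st: "(step prog d ^^ 4) (31, im, rm) = (37, im(-7 := -20 - int m), rm(-9 := S d m, -3 := S d m + S d m))"
      by (rule segM1_stop[where n=n]) (use less.prems True in auto)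
    show ?thesis
      by (rule exI[of _ 4], rule exI[of _ "im(-7 := -20 - int m)"], rule exI[of _ "rm(-9 := S d m, -3 := S d m + S d m)"],
          rule exI[of _ m]) (use st less.prems True in auto)
  next
    case False
    have mc: "m < c" using False less.prems by (metis le_neq_implies_less)
    let ?im1 = "im(-7 := -20 - int m, -3 := int m + 1)"
    let ?rm1 = "rm(-9 := S d m, -3 := S d m + S d m)"
    have st: "(step prog d ^^ 6) (31, im, rm) = (31, ?im1, ?rm1)"
      by (rule segM1_go[where n=n]) (use less.prems False in auto)
    have lt1: "\<forall>k\<in>{i..<Suc m}. S d k + S d k < TT d i c" using less.prems False by (auto simp: less_Suc_eq)
    have "\<exists>t im' rm' m'. (step prog d ^^ t) (31, ?im1, ?rm1) = (37, im', rm') \<and> Suc m \<le> m' \<and> m' \<le> c \<and>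
     (\<forall>k\<in>{i..<m'}. S d k + S d k < TT d i c) \<and> TT d i c \<le> S d m' + S d m' \<and> t + 6 * Suc m \<le> 6 * m' + 4 \<and>
     Mem2 d n im' rm' \<and> im' (-1) = int i \<and> im' (-2) = int c \<and> im' (-3) = int m' \<and>
     rm' (-1) = e \<and> rm' (-2) = TT d i c \<and> rm' (-6) = S d i \<and> rm' (-7) = S d c \<and> rm' (-9) = S d m' \<and>
     frame ?im1 ?rm1 im' rm'"
      by (rule less.hyps[of "Suc m"]) (use mc less.prems lt1 in auto)
    then obtain t im' rm' m' where h: "(step prog d ^^ t) (31, ?im1, ?rm1) = (37, im', rm')" "Suc m \<le> m'" "m' \<le> c"
      "(\<forall>k\<in>{i..<m'}. S d k + S d k < TT d i c)" "TT d i c \<le> S d m' + S d m'" "t + 6 * Suc m \<le> 6 * m' + 4"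
      "Mem2 d n im' rm'" "im' (-1) = int i" "im' (-2) = int c" "im' (-3) = int m'"
      "rm' (-1) = e" "rm' (-2) = TT d i c" "rm' (-6) = S d i" "rm' (-7) = S d c" "rm' (-9) = S d m'"
      "frame ?im1 ?rm1 im' rm'" by blast
    show ?thesis
      by (rule exI[of _ "6 + t"], rule exI[of _ im'], rule exI[of _ rm'], rule exI[of _ m'])
         (use reach_trans[OF st h(1)] h in auto)
  qed
qed


lemma segG:
  assumes M: "Mem2 d n im rm" and r: "im (-1) = int i" "im (-2) = int c" "im (-3) = int m"
    "rm (-1) = e" "rm (-6) = S d i" "rm (-7) = S d c" "rm (-9) = S d m"
    and ic: "1 \<le> i" "i \<le> m" "m \<le> c" "c \<le> n"
  shows "\<exists>t im' rm'. (step prog d ^^ t) (37, im, rm) = (46, im', rm') \<and> t \<le> 9 \<and>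
     Mem2 d n im' rm' \<and> im' (-1) = int i \<and> im' (-2) = int c \<and> im' (-3) = int m \<and>
     rm' (-1) = e \<and> rm' (-7) = S d c \<and> 
     rm' (-4) = (if m \<le> i then S d c - S d m + e else max (S d c - S d m + e) (S d (m - 1) - S d i)) \<and>
     frame im rm im' rm'"
proof (cases "m \<le> i")
  case True
  show ?thesis
    by (rule exI[of _ 3]) (use M r True in \<open>simp add: funpow_num step_eq Mem2_def\<close>)
next
  case False
  have sm: "rm (-20 - (int m - 1)) = S d (m - 1)" using Mem2_S[OF M, of "m - 1"] ic False
    by (simp add: of_nat_diff)
  show ?thesis
  proof (cases "S d (m - 1) - S d i \<le> S d c - S d m + e")
    case True
    show ?thesis
      by (rule exI[of _ 8]) (use M r False sm True in \<open>simp add: funpow_num step_eq Mem2_def max_def\<close>)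
  next
    case F2: False
    show ?thesis
      by (rule exI[of _ 9]) (use M r False sm F2 in \<open>simp add: funpow_num step_eq Mem2_def max_def\<close>)
  qed
qed


lemma segH_stop:
  assumes M: "Mem2 d n im rm" and r: "rm (-1) = e" "rm (-4) = g" "rm (-7) = S d c"
    and le: "S d n - S d c + e \<le> g"
  shows "\<exists>rm'. (step prog d ^^ 3) (46, im, rm) = (51, im, rm') \<and> Mem2 d n im rm' \<and> rm' (-4) = g \<and>
      frame im rm im rm'"
  by (use M r le in \<open>simp add: funpow_num step_eq Mem2_def\<close>)

lemma segH_go:
  assumes M: "Mem2 d n im rm" and r: "rm (-1) = e" "rm (-4) = g" "rm (-7) = S d c" "im (-2) = int c"
    and le: "\<not> S d n - S d c + e \<le> g"
  shows "\<exists>rm'. (step prog d ^^ 5) (46, im, rm) = (22, im(-2 := int c + 1), rm') \<and> Mem2 d n im rm' \<and>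
      frame im rm im rm'"
  by (use M r le in \<open>simp add: funpow_num step_eq Mem2_def\<close>)

lemma segOut:
  assumes M: "Mem2 d n im rm" and r: "im (-1) = int i" "im (-2) = int c" "im (-3) = int m" "rm (-4) = g"
    and ic: "1 \<le> i" "i \<le> c" "c \<le> n"
  shows "\<exists>t im' rm'. (step prog d ^^ t) (51, im, rm) = (18, im', rm') \<and> t \<le> 13 \<and>
     Mem2 d n im' rm' \<and> im' (-1) = int (Suc i) \<and> im' (-2) = int c \<and> im' (-3) = int m \<and>
     rm' (int i) = (if i < c \<and> \<not> g \<le> S d n - S d (c - 1) + d i (c - 1) then S d n - S d (c - 1) + d i (c - 1) else g) \<and>
     im' (int i) = int (if i < c \<and> \<not> g \<le> S d n - S d (c - 1) + d i (c - 1) then c - 1 else c) \<and>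
     (\<forall>a>0. a \<noteq> int i \<longrightarrow> im' a = im a \<and> rm' a = rm a)"
proof (cases "c \<le> i")
  case True
  show ?thesis
    by (rule exI[of _ 5]) (use M r True ic in \<open>simp add: funpow_num step_eq Mem2_def\<close>)
next
  case False
  have sm: "rm (-20 - (int c - 1)) = S d (c - 1)" using Mem2_S[OF M, of "c - 1"] ic False
    by (simp add: of_nat_diff)
  have nc: "nat (int c - 1) = c - 1" by simp
  show ?thesis
  proof (cases "g \<le> S d n - S d (c - 1) + d i (c - 1)")
    case True
    show ?thesis
      by (rule exI[of _ 12]) (use M r False sm nc True ic in \<open>simp add: funpow_num step_eq Mem2_def of_nat_diff\<close>)
  next
    case F2: False
    show ?thesis
      by (rule exI[of _ 13]) (use M r False sm nc F2 ic in \<open>simp add: funpow_num step_eq Mem2_def of_nat_diff\<close>)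
  qed
qed


lemma cloop:
  assumes met: "metric_on d n"
  shows "Mem2 d n im rm \<Longrightarrow> im (-1) = int i \<Longrightarrow> im (-2) = int c \<Longrightarrow> im (-3) = int m \<Longrightarrow>
    1 \<le> i \<Longrightarrow> i \<le> c \<Longrightarrow> c \<le> n \<Longrightarrow> 1 \<le> m \<Longrightarrow> m \<le> c \<Longrightarrow>
    \<forall>j\<in>{i..<c}. gg d i j < hh d n i j \<Longrightarrow> \<forall>k\<in>{i..<m}. S d k + S d k < TT d i c \<Longrightarrow>
    \<exists>t im' rm' c' m'. (step prog d ^^ t) (22, im, rm) = (18, im', rm') \<and> c \<le> c' \<and> c' \<le> n \<and>
      1 \<le> m' \<and> m' \<le> c' \<and> t + 100 * c + 20 * m \<le> 100 * c' + 20 * m' + 60 \<and>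
      Mem2 d n im' rm' \<and> im' (-1) = int (Suc i) \<and> im' (-2) = int c' \<and> im' (-3) = int m' \<and>
      (\<forall>j\<in>{i..<c'}. gg d i j < hh d n i j) \<and> (\<forall>k\<in>{i..<m'}. S d k + S d k < TT d i c') \<and>
      rm' (int i) = lam d n i \<and> int i \<le> im' (int i) \<and> im' (int i) \<le> int n \<and>
      ecc d n i (nat (im' (int i))) = lam d n i \<and>
      (\<forall>a>0. a \<noteq> int i \<longrightarrow> im' a = im a \<and> rm' a = rm a)"
proof (induction "n - c" arbitrary: c m im rm rule: less_induct)
  case less
  note P = less.prems
  obtain tA imA rmA where A: "(step prog d ^^ tA) (22, im, rm) = (31, imA, rmA)" "tA \<le> 9" "Mem2 d n imA rmA"
     "imA (-1) = int i" "imA (-2) = int c" "imA (-3) = int (max m i)" "rmA (-1) = d i c"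
     "rmA (-2) = TT d i c" "rmA (-6) = S d i" "rmA (-7) = S d c" "frame im rm imA rmA"
    using segA[OF P(1-4) P(5-7)] by blast
  have top: "TT d i c \<le> S d c + S d c" using d_le_S[OF met P(5,6,7)] unfolding TT_def by simp
  have ltA: "\<forall>k\<in>{i..<max m i}. S d k + S d k < TT d i c" using P(11) by (auto simp: max_def)
  obtain tM imM rmM m' where Mr: "(step prog d ^^ tM) (31, imA, rmA) = (37, imM, rmM)" "max m i \<le> m'" "m' \<le> c"
     "\<forall>k\<in>{i..<m'}. S d k + S d k < TT d i c" "TT d i c \<le> S d m' + S d m'" "tM + 6 * max m i \<le> 6 * m' + 4"
     "Mem2 d n imM rmM" "imM (-1) = int i" "imM (-2) = int c" "imM (-3) = int m'"
     "rmM (-1) = d i c" "rmM (-2) = TT d i c" "rmM (-6) = S d i" "rmM (-7) = S d c" "rmM (-9) = S d m'"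
     "frame imA rmA imM rmM"
  proof -
    have "max m i \<le> c" using P(6,9) by simp
    from segM[OF A(3-5) A(6) A(7-10) _ _ this P(7) ltA top] P(5) show ?thesis using that by auto
  qed
  have im': "i \<le> m'" using Mr(2) by simp
  obtain tG imG rmG where G: "(step prog d ^^ tG) (37, imM, rmM) = (46, imG, rmG)" "tG \<le> 9"
     "Mem2 d n imG rmG" "imG (-1) = int i" "imG (-2) = int c" "imG (-3) = int m'"
     "rmG (-1) = d i c" "rmG (-7) = S d c"
     "rmG (-4) = (if m' \<le> i then S d c - S d m' + d i c else max (S d c - S d m' + d i c) (S d (m' - 1) - S d i))"
     "frame imM rmM imG rmG"
    using segG[OF Mr(7-10) Mr(11) Mr(13-15)] P(5-7) im' Mr(3) by auto
  have g: "rmG (-4) = gg d i c"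
    using G(9) gg_m[OF met P(5) im' Mr(3) P(7) Mr(4) Mr(5)] by (simp add: algebra_simps)
  have hform: "S d n - S d c + d i c = hh d n i c" unfolding hh_def by simp
  have t1: "(step prog d ^^ (tA + tM + tG)) (22, im, rm) = (46, imG, rmG)"
    using reach_trans[OF reach_trans[OF A(1) Mr(1)] G(1)] .
  have fr1: "frame im rm imG rmG" using A(11) Mr(16) G(10) by simp
  show ?case
  proof (cases "hh d n i c \<le> gg d i c")
    case True
    obtain rmH where H: "(step prog d ^^ 3) (46, imG, rmG) = (51, imG, rmH)" "Mem2 d n imG rmH" "rmH (-4) = gg d i c"
        "frame imG rmG imG rmH"
      using segH_stop[OF G(3) G(7) g G(8)] True hform by auto
    obtain tO imO rmO where O: "(step prog d ^^ tO) (51, imG, rmH) = (18, imO, rmO)" "tO \<le> 13"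
     "Mem2 d n imO rmO" "imO (-1) = int (Suc i)" "imO (-2) = int c" "imO (-3) = int m'"
     "rmO (int i) = (if i < c \<and> \<not> gg d i c \<le> S d n - S d (c - 1) + d i (c - 1) then S d n - S d (c - 1) + d i (c - 1) else gg d i c)"
     "imO (int i) = int (if i < c \<and> \<not> gg d i c \<le> S d n - S d (c - 1) + d i (c - 1) then c - 1 else c)"
     "(\<forall>a>0. a \<noteq> int i \<longrightarrow> imO a = imG a \<and> rmO a = rmH a)"
      using segOut[OF H(2) G(4-6) H(3) P(5-7)] by blast
    have hform2: "S d n - S d (c - 1) + d i (c - 1) = hh d n i (c - 1)" unfolding hh_def by simp
    have LC: "lam d n i = (if i < c \<and> \<not> gg d i c \<le> hh d n i (c - 1) then hh d n i (c - 1) else gg d i c)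
     \<and> ecc d n i (if i < c \<and> \<not> gg d i c \<le> hh d n i (c - 1) then c - 1 else c)
         = (if i < c \<and> \<not> gg d i c \<le> hh d n i (c - 1) then hh d n i (c - 1) else gg d i c)"
      by (rule lam_char[OF met P(5-7) P(10) True])
    have t2: "(step prog d ^^ (tA + tM + tG + 3 + tO)) (22, im, rm) = (18, imO, rmO)"
      using reach_trans[OF reach_trans[OF t1 H(1)] O(1)] .
    have outs: "rmO (int i) = lam d n i \<and> int i \<le> imO (int i) \<and> imO (int i) \<le> int n \<and>
      ecc d n i (nat (imO (int i))) = lam d n i"
      using O(7,8) LC P(5-7) unfolding hform2 by (auto split: if_splits)
    show ?thesis
      apply (rule exI[of _ "tA + tM + tG + 3 + tO"], rule exI[of _ imO], rule exI[of _ rmO], rule exI[of _ c], rule exI[of _ m'])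
      using t2 O(3-6) outs P(5-7,10) Mr(2-4) O(9) H(4) fr1 A(2) Mr(6) G(2) O(2) im' by auto
  next
    case False
    have cn: "c < n"
    proof (rule ccontr)
      assume "\<not> c < n" then have "c = n" using P(7) by simp
      then show False using hh_le_gg_n[OF met P(5)] False P(6,7) by simp
    qed
    obtain rmH where H: "(step prog d ^^ 5) (46, imG, rmG) = (22, imG(-2 := int c + 1), rmH)" "Mem2 d n imG rmH"
        "frame imG rmG imG rmH"
      using segH_go[OF G(3) G(7) g G(8) G(5)] False hform by auto
    let ?im2 = "imG(-2 := int c + 1)"
    have M2: "Mem2 d n ?im2 rmH" using H(2) by simp
    have below2: "\<forall>j\<in>{i..<Suc c}. gg d i j < hh d n i j" using P(10) False by (auto simp: less_Suc_eq)
    have lt2: "\<forall>k\<in>{i..<m'}. S d k + S d k < TT d i (Suc c)"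
      using Mr(4) TT_step_j[OF met P(5) _ _ cn, of] P(5-7) by (smt (verit) le_trans)
    obtain t' im' rm' c' m'' where R: "(step prog d ^^ t') (22, ?im2, rmH) = (18, im', rm')" "Suc c \<le> c'" "c' \<le> n"
      "1 \<le> m''" "m'' \<le> c'" "t' + 100 * Suc c + 20 * m' \<le> 100 * c' + 20 * m'' + 60"
      "Mem2 d n im' rm'" "im' (-1) = int (Suc i)" "im' (-2) = int c'" "im' (-3) = int m''"
      "(\<forall>j\<in>{i..<c'}. gg d i j < hh d n i j)" "(\<forall>k\<in>{i..<m''}. S d k + S d k < TT d i c')"
      "rm' (int i) = lam d n i" "int i \<le> im' (int i)" "im' (int i) \<le> int n"
      "ecc d n i (nat (im' (int i))) = lam d n i"
      "(\<forall>a>0. a \<noteq> int i \<longrightarrow> im' a = ?im2 a \<and> rm' a = rmH a)"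
      using less.hyps[of "Suc c" ?im2 rmH m'] cn M2 G(4,6) P(5) Mr(3) im' below2 lt2 by fastforce
    have t2: "(step prog d ^^ (tA + tM + tG + 5 + t')) (22, im, rm) = (18, im', rm')"
      using reach_trans[OF reach_trans[OF t1 H(1)] R(1)] .
    show ?thesis
      apply (rule exI[of _ "tA + tM + tG + 5 + t'"], rule exI[of _ im'], rule exI[of _ rm'], rule exI[of _ c'], rule exI[of _ m''])
      using t2 R fr1 H(3) A(2) Mr(6) G(2) Mr(2) by auto
  qed
qed


definition OH :: "(nat \<Rightarrow> nat \<Rightarrow> real) \<Rightarrow> nat \<Rightarrow> nat \<Rightarrow> nat \<Rightarrow> nat \<Rightarrow> (int \<Rightarrow> int) \<Rightarrow> (int \<Rightarrow> real) \<Rightarrow> bool" where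
  "OH d n i c m im rm \<longleftrightarrow> Mem2 d n im rm \<and> Out d n i im rm \<and> im (-1) = int i \<and> im (-2) = int c \<and>
     im (-3) = int m \<and> 1 \<le> i \<and> i \<le> Suc n \<and> 1 \<le> c \<and> c \<le> n \<and> 1 \<le> m \<and> m \<le> c \<and>
     (\<forall>j\<in>{i..<c}. gg d i j < hh d n i j) \<and> (\<forall>k\<in>{i..<m}. S d k + S d k < TT d i c)"

lemma seg18:
  assumes "im (-1) = int i" "im (-2) = int c" "im 0 = int n" "i \<le> n" "im (-10) = 0"
  shows "\<exists>t. t \<le> 3 \<and> (step prog d ^^ t) (18, im, rm) = (22, im(-2 := int (max c i)), rm)"
proof (cases "i \<le> c")
  case True
  then have "im(-2 := int (max c i)) = im" using assms by (auto simp: max_def)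
  then show ?thesis using assms True by (intro exI[of _ 2]) (simp add: funpow_num step_eq)
next
  case False
  show ?thesis using assms False
    by (intro exI[of _ 3]) (simp add: funpow_num step_eq max_def Mem2_def fun_upd_def)
qed

lemma outer_iter:
  assumes met: "metric_on d n" and O: "OH d n i c m im rm" and i: "i \<le> n"
  shows "\<exists>t im' rm' c' m'. (step prog d ^^ t) (18, im, rm) = (18, im', rm') \<and> OH d n (Suc i) c' m' im' rm' \<and>
    t + 300 * i + 100 * c + 20 * m \<le> 300 * Suc i + 100 * c' + 20 * m'"
proof -
  note O' = O[unfolded OH_def]
  obtain t0 where t0: "t0 \<le> 3" "(step prog d ^^ t0) (18, im, rm) = (22, im(-2 := int (max c i)), rm)"
  proof -
    have "im (-10) = 0" "im 0 = int n" using O' unfolding Mem2_def by auto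
    from seg18[of im i c n d rm, OF _ _ this(2) i this(1)] O' show ?thesis using that by blast
  qed
  let ?im = "im(-2 := int (max c i))"
  have M: "Mem2 d n ?im rm" using O' by simp
  have below: "\<forall>j\<in>{i..<max c i}. gg d i j < hh d n i j" using O' by (auto simp: max_def)
  have lt: "\<forall>k\<in>{i..<m}. S d k + S d k < TT d i (max c i)"
  proof
    fix k assume k: "k \<in> {i..<m}"
    have "TT d i c \<le> TT d i (max c i)" using TT_mono_j[OF met, of i c "max c i"] O' i by auto
    then show "S d k + S d k < TT d i (max c i)" using O' k by fastforce
  qed
  obtain t im' rm' c' m' where C: "(step prog d ^^ t) (22, ?im, rm) = (18, im', rm')" "max c i \<le> c'" "c' \<le> n"
      "1 \<le> m'" "m' \<le> c'" "t + 100 * max c i + 20 * m \<le> 100 * c' + 20 * m' + 60"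
      "Mem2 d n im' rm'" "im' (-1) = int (Suc i)" "im' (-2) = int c'" "im' (-3) = int m'"
      "(\<forall>j\<in>{i..<c'}. gg d i j < hh d n i j)" "(\<forall>k\<in>{i..<m'}. S d k + S d k < TT d i c')"
      "rm' (int i) = lam d n i" "int i \<le> im' (int i)" "im' (int i) \<le> int n"
      "ecc d n i (nat (im' (int i))) = lam d n i"
      "(\<forall>a>0. a \<noteq> int i \<longrightarrow> im' a = ?im a \<and> rm' a = rm a)"
  proof -
    have h: "?im (-1) = int i" "?im (-2) = int (max c i)" "?im (-3) = int m" "1 \<le> i" "i \<le> max c i"
      "max c i \<le> n" "1 \<le> m" "m \<le> max c i" using O' i by auto
    from cloop[OF met M h below lt] show ?thesis using that by blast
  qed
  have Out': "Out d n (Suc i) im' rm'"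
    unfolding Out_def
  proof
    fix i' assume i': "i' \<in> {1..<Suc i}"
    show "rm' (int i') = lam d n i' \<and> int i' \<le> im' (int i') \<and> im' (int i') \<le> int n \<and>
        ecc d n i' (nat (im' (int i'))) = lam d n i'"
    proof (cases "i' = i")
      case True then show ?thesis using C by simp
    next
      case False
      then have "i' \<in> {1..<i}" using i' by auto
      moreover have "im' (int i') = im (int i')" "rm' (int i') = rm (int i')" using C(17) i' False by auto
      ultimately show ?thesis using O' unfolding Out_def by auto
    qed
  qed
  have below': "\<forall>j\<in>{Suc i..<c'}. gg d (Suc i) j < hh d n (Suc i) j"
  proof
    fix j assume j: "j \<in> {Suc i..<c'}"
    have "gg d (Suc i) j - hh d n (Suc i) j \<le> gg d i j - hh d n i j" using D_step[OF met, of i j] O' j C(3) by auto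
    moreover have "gg d i j < hh d n i j" using C(11) j by auto
    ultimately show "gg d (Suc i) j < hh d n (Suc i) j" by simp
  qed
  have lt': "\<forall>k\<in>{Suc i..<m'}. S d k + S d k < TT d (Suc i) c'"
  proof
    fix k assume k: "k \<in> {Suc i..<m'}"
    then have "i < n" using C(3,5) by auto
    then have "TT d i c' \<le> TT d (Suc i) c'" using TT_step_i[OF met, of i c'] O' C(2,3) by auto
    moreover have "S d k + S d k < TT d i c'" using C(12) k by auto
    ultimately show "S d k + S d k < TT d (Suc i) c'" by simp
  qed
  have OH': "OH d n (Suc i) c' m' im' rm'"
    unfolding OH_def using C Out' below' lt' O' i by auto
  show ?thesis
    by (rule exI[of _ "t0 + t"], rule exI[of _ im'], rule exI[of _ rm'], rule exI[of _ c'], rule exI[of _ m'])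
       (use reach_trans[OF t0(2) C(1)] OH' t0(1) C(6) in auto)
qed

lemma outer_loop:
  assumes met: "metric_on d n"
  shows "OH d n i c m im rm \<Longrightarrow> \<exists>t im' rm'. (step prog d ^^ t) (18, im, rm) = (19, im', rm') \<and>
     Out d n (Suc n) im' rm' \<and> t + 300 * i + 100 * c + 20 * m \<le> 300 * Suc n + 120 * n + 1"
proof (induction "Suc n - i" arbitrary: i c m im rm rule: less_induct)
  case less
  note O' = less.prems[unfolded OH_def]
  show ?case
  proof (cases "i \<le> n")
    case True
    obtain t im' rm' c' m' where I: "(step prog d ^^ t) (18, im, rm) = (18, im', rm')" "OH d n (Suc i) c' m' im' rm'"
      "t + 300 * i + 100 * c + 20 * m \<le> 300 * Suc i + 100 * c' + 20 * m'"
      using outer_iter[OF met less.prems True] by blast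
    obtain t2 im2 rm2 where R: "(step prog d ^^ t2) (18, im', rm') = (19, im2, rm2)" "Out d n (Suc n) im2 rm2"
      "t2 + 300 * Suc i + 100 * c' + 20 * m' \<le> 300 * Suc n + 120 * n + 1"
    proof -
      have "Suc n - Suc i < Suc n - i" using True by simp
      from less.hyps[OF this I(2)] show ?thesis using that by blast
    qed
    show ?thesis
      by (rule exI[of _ "t + t2"], rule exI[of _ im2], rule exI[of _ rm2])
         (use reach_trans[OF I(1) R(1)] R(2,3) I(3) in auto)
  next
    case False
    then have "i = Suc n" using O' by simp
    then have st: "(step prog d ^^ 1) (18, im, rm) = (19, im, rm)" using O' unfolding Mem2_def
      by (simp add: step_eq)
    show ?thesis
      by (rule exI[of _ 1], rule exI[of _ im], rule exI[of _ rm])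
         (use st O' \<open>i = Suc n\<close> in auto)
  qed
qed


definition P1 :: "(nat \<Rightarrow> nat \<Rightarrow> real) \<Rightarrow> nat \<Rightarrow> nat \<Rightarrow> (int \<Rightarrow> int) \<Rightarrow> (int \<Rightarrow> real) \<Rightarrow> bool" where
  "P1 d n k im rm \<longleftrightarrow> im 0 = int n \<and> im (-5) = 1 \<and> im (-6) = -20 \<and> im (-10) = 0 \<and> im (-4) = int k \<and>
     rm (-11) = 0 \<and> (\<forall>k'\<in>{1..k}. rm (-20 - int k') = S d k') \<and> 1 \<le> k \<and> k \<le> n"

lemma body_raw:
  assumes "im 0 = int n" "im (-5) = 1" "im (-6) = -20" "im (-4) = int k" "k < n" "rm (-20 - int k) = x"
  shows "\<exists>im' rm'. (step prog d ^^ 10) (3, im, rm) = (3, im', rm') \<and> im' 0 = im 0 \<and> im' (-5) = im (-5) \<and>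
    im' (-6) = im (-6) \<and> im' (-10) = im (-10) \<and> im' (-4) = int k + 1 \<and> rm' (-11) = rm (-11) \<and>
    rm' (-20 - (int k + 1)) = x + d k (Suc k) \<and> (\<forall>a. a < -20 \<longrightarrow> a \<noteq> -20 - (int k + 1) \<longrightarrow> rm' a = rm a)"
  using assms by (simp add: funpow_num step_eq nat_add_distrib)

lemma body:
  assumes P: "P1 d n k im rm" and k: "k < n"
  shows "\<exists>im' rm'. (step prog d ^^ 10) (3, im, rm) = (3, im', rm') \<and> P1 d n (Suc k) im' rm'"
proof -
  note P' = P[unfolded P1_def]
  have x: "rm (-20 - int k) = S d k" using P' by auto
  obtain im' rm' where B: "(step prog d ^^ 10) (3, im, rm) = (3, im', rm')" "im' 0 = im 0" "im' (-5) = im (-5)"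
    "im' (-6) = im (-6)" "im' (-10) = im (-10)" "im' (-4) = int k + 1" "rm' (-11) = rm (-11)"
    "rm' (-20 - (int k + 1)) = S d k + d k (Suc k)" "(\<forall>a. a < -20 \<longrightarrow> a \<noteq> -20 - (int k + 1) \<longrightarrow> rm' a = rm a)"
    using body_raw[of im n k rm "S d k" d] P' k x by auto
  have "P1 d n (Suc k) im' rm'"
    unfolding P1_def
  proof (intro conjI)
    show "\<forall>k'\<in>{1..Suc k}. rm' (-20 - int k') = S d k'"
    proof
      fix k' assume k': "k' \<in> {1..Suc k}"
      show "rm' (-20 - int k') = S d k'"
      proof (cases "k' = Suc k")
        case True then show ?thesis using B(8) S_Suc[of k d] P' by simp
      next
        case False
        then have "k' \<in> {1..k}" using k' by auto
        then show ?thesis using B(9)[rule_format, of "-20 - int k'"] P' by auto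
      qed
    qed
  qed (use B P' k in auto)
  then show ?thesis using B(1) by blast
qed

lemma loop1:
  shows "P1 d n k im rm \<Longrightarrow> \<exists>t im' rm'. (step prog d ^^ t) (3, im, rm) = (13, im', rm') \<and> P1 d n n im' rm' \<and>
     t + 10 * k \<le> 10 * n + 1"
proof (induction "n - k" arbitrary: k im rm rule: less_induct)
  case less
  note P' = less.prems[unfolded P1_def]
  show ?case
  proof (cases "k < n")
    case True
    obtain im' rm' where B: "(step prog d ^^ 10) (3, im, rm) = (3, im', rm')" "P1 d n (Suc k) im' rm'"
      using body[OF less.prems True] by blast
    have "n - Suc k < n - k" using True by simp
    from less.hyps[OF this B(2)] obtain t im2 rm2 where R: "(step prog d ^^ t) (3, im', rm') = (13, im2, rm2)"
      "P1 d n n im2 rm2" "t + 10 * Suc k \<le> 10 * n + 1" by blast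
    show ?thesis
      by (rule exI[of _ "10 + t"], rule exI[of _ im2], rule exI[of _ rm2]) (use reach_trans[OF B(1) R(1)] R in auto)
  next
    case False
    then have kn: "k = n" using P' by simp
    have "(step prog d ^^ 1) (3, im, rm) = (13, im, rm)" using P' kn by (simp add: step_eq)
    then show ?thesis using less.prems kn by (intro exI[of _ 1] exI[of _ im] exI[of _ rm]) auto
  qed
qed

lemma prog_nth1 [simp]: "prog ! Suc 0 = IConst (-6) (-20)" by (simp add: prog_def)
lemma prog_nth2 [simp]: "prog ! Suc (Suc 0) = IConst (-4) 1" by (simp add: prog_def)
lemma prog_nth0 [simp]: "prog ! 0 = IConst (-5) 1" by (simp add: prog_def)
lemma S_Suc0 [simp]: "S d (Suc 0) = 0" unfolding S_def by simp

lemma init_seg: "\<exists>im rm. (step prog d ^^ 3) (init n) = (3, im, rm) \<and> (1 \<le> n \<longrightarrow> P1 d n 1 im rm)"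
  by (simp add: init_def funpow_num step_eq P1_def S_1)

lemma seg13:
  assumes "P1 d n n im rm"
  shows "\<exists>im' rm'. (step prog d ^^ 5) (13, im, rm) = (18, im', rm') \<and> OH d n 1 1 1 im' rm'"
proof -
  note P' = assms[unfolded P1_def]
  have sn: "rm (-20 - int n) = S d n" using P' by auto
  show ?thesis
    using P' sn by (simp add: funpow_num step_eq OH_def Mem2_def Out_def)
qed

theorem lemma1:
  shows "\<exists>(prog :: instr list) (c :: nat) (n0 :: nat). \<forall>n d. n \<ge> n0 \<longrightarrow> metric_on d n \<longrightarrow>
           (\<exists>t \<le> c * n. halted prog (run prog d n t) \<and> correct_output d n (run prog d n t))"
proof (rule exI[of _ prog], rule exI[of _ 500], rule exI[of _ 1], intro allI impI)
  fix n :: nat and d :: "nat \<Rightarrow> nat \<Rightarrow> real"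
  assume n: "1 \<le> n" and met: "metric_on d n"
  obtain im0 rm0 where I: "(step prog d ^^ 3) (init n) = (3, im0, rm0)" "P1 d n 1 im0 rm0"
    using init_seg[of d n] n by auto
  obtain t1 im1 rm1 where L: "(step prog d ^^ t1) (3, im0, rm0) = (13, im1, rm1)" "P1 d n n im1 rm1"
     "t1 + 10 * 1 \<le> 10 * n + 1" using loop1[OF I(2)] by blast
  obtain im2 rm2 where Q: "(step prog d ^^ 5) (13, im1, rm1) = (18, im2, rm2)" "OH d n 1 1 1 im2 rm2"
    using seg13[OF L(2)] by blast
  obtain t2 im3 rm3 where Z: "(step prog d ^^ t2) (18, im2, rm2) = (19, im3, rm3)" "Out d n (Suc n) im3 rm3"
     "t2 + 300 * 1 + 100 * 1 + 20 * 1 \<le> 300 * Suc n + 120 * n + 1" using outer_loop[OF met Q(2)] by blast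
  have run: "run prog d n (3 + t1 + 5 + t2) = (19, im3, rm3)"
    unfolding run_def using reach_trans[OF reach_trans[OF reach_trans[OF I(1) L(1)] Q(1)] Z(1)] .
  show "\<exists>t \<le> 500 * n. halted prog (run prog d n t) \<and> correct_output d n (run prog d n t)"
  proof (intro exI conjI)
    show "3 + t1 + 5 + t2 \<le> 500 * n" using L(3) Z(3) n by simp
    show "halted prog (run prog d n (3 + t1 + 5 + t2))" unfolding run halted_def by simp
    show "correct_output d n (run prog d n (3 + t1 + 5 + t2))"
      unfolding run correct_output_def using Z(2) unfolding Out_def by auto
  qed
qed


end
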